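(* Let $\alpha$ be an infinite permutation with $p_{\alpha}(n)=n$ for all $n\ge1$. Then the underlying word $s$ of $\alpha$ is either ultimately periodic or Sturmian.
   Context: An infinite permutation is an equivalence class of sequences of pairwise distinct reals under $a\sim b\iff(a[i]<a[j]\Leftrightarrow b[i]<b[j]\ \forall i,j)$; write $\alpha=(\alpha[n])_{n\ge0}$ with the induced order. $p_\alpha(n)$ is the number of distinct factors $\alpha[i..i+n-1]$ of length $n$, each regarded as a finite permutation (relative order). The underlying word of $\alpha$ is the infinite binary word $s=s[0]s[1]\cdots$ with $s[i]=0$ if $\alpha[i]<\alpha[i+1]$ and $s[i]=1$ otherwise. An infinite word is ultimately periodic if it equals $vwww\cdots$ for finite words $v,w$ with $w$ nonempty. An infinite word $u$ is Sturmian if it is not ultimately periodic and has exactly $n+1$ distinct factors (blocks of consecutive letters) of length $n$ for every $n\ge1$. *)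

theory Defs
  imports Complex_Main "HOL-Library.Omega_Words_Fun"
begin

text \<open>An infinite permutation is represented by a representative sequence
  a :: nat => real of pairwise distinct reals (inj a); all notions below depend
  only on the relative order of the values, i.e. on the equivalence class.\<close>

text \<open>The factor of length n starting at position i, regarded as a finite
  permutation: its relative order, as a relation on positions 0..n-1.\<close>
definition perm_factor :: "(nat \<Rightarrow> real) \<Rightarrow> nat \<Rightarrow> nat \<Rightarrow> (nat \<Rightarrow> nat \<Rightarrow> bool)" where
  "perm_factor a i n = (\<lambda>j k. j < n \<and> k < n \<and> a (i + j) < a (i + k))"

definition perm_complexity :: "(nat \<Rightarrow> real) \<Rightarrow> nat \<Rightarrow> nat" where
  "perm_complexity a n = card {perm_factor a i n | i. True}"

definition underlying_word :: "(nat \<Rightarrow> real) \<Rightarrow> nat word" where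
  "underlying_word a = (\<lambda>i. if a i < a (Suc i) then 0 else 1)"

definition ultimately_periodic :: "'b word \<Rightarrow> bool" where
  "ultimately_periodic u \<longleftrightarrow> (\<exists>v w. w \<noteq> [] \<and> u = v \<frown> w\<^sup>\<omega>)"

definition word_complexity :: "'b word \<Rightarrow> nat \<Rightarrow> nat" where
  "word_complexity u n = card {u [i \<rightarrow> i + n] | i. True}"

definition sturmian :: "'b word \<Rightarrow> bool" where
  "sturmian u \<longleftrightarrow> \<not> ultimately_periodic u \<and> (\<forall>n\<ge>1. word_complexity u n = n + 1)"

end

theory Submission
  imports Defs
begin

lemma up_of_shift:
  fixes s :: "'b word"
  assumes p: "p > 0" and per: "\<And>k. s (i + k) = s (i + p + k)"
  shows "ultimately_periodic s"
proof -
  have rep: "s (i + q * p + r) = s (i + r)" for q r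
  proof (induction q)
    case 0 then show ?case by simp
  next
    case (Suc q)
    have "s (i + Suc q * p + r) = s (i + p + (q * p + r))" by (simp add: algebra_simps)
    also have "\<dots> = s (i + (q*p + r))" using per[of "q*p+r"] by simp
    finally show ?case using Suc by (simp add: add.assoc)
  qed
  define w where "w = s [i \<rightarrow> i + p]"
  have lw: "length w = p" by (simp add: w_def subsequence_def)
  have "s = prefix i s \<frown> w\<^sup>\<omega>"
  proof
    fix m
    show "s m = (prefix i s \<frown> w\<^sup>\<omega>) m"
    proof (cases "m < i")
      case True then show ?thesis by (simp add: subsequence_def)
    next
      case False
      define q where "q = (m - i) div p"
      define r where "r = (m - i) mod p"
      have r: "r < p" using p r_def by simp
      have m: "m = i + q * p + r" using False by (simp add: q_def r_def)
      have "(prefix i s \<frown> w\<^sup>\<omega>) m = w ! r" using False p lw by (simp add: subsequence_def r_def)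
      also have "\<dots> = s (i + r)" using r by (simp add: w_def subsequence_def)
      finally show ?thesis using rep m by simp
    qed
  qed
  moreover have "w \<noteq> []" using lw p by auto
  ultimately show ?thesis unfolding ultimately_periodic_def by blast
qed

lemma morse_hedlund_step:
  fixes s :: "'b word"
  defines "F \<equiv> \<lambda>n. {s [i \<rightarrow> i + n] | i. True}"
  assumes fin: "finite (F (Suc n))" and eq: "card (F (Suc n)) = card (F n)"
  shows "ultimately_periodic s"
proof -
  have img: "take n ` F (Suc n) = F n"
  proof
    show "take n ` F (Suc n) \<subseteq> F n"
      by (auto simp: F_def subsequence_def take_map)
    show "F n \<subseteq> take n ` F (Suc n)"
    proof
      fix x assume "x \<in> F n"
      then obtain i where x: "x = s [i \<rightarrow> i + n]" by (auto simp: F_def)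
      have "x = take n (s [i \<rightarrow> i + Suc n])" by (simp add: x subsequence_def take_map)
      moreover have "s [i \<rightarrow> i + Suc n] \<in> F (Suc n)" by (auto simp: F_def)
      ultimately show "x \<in> take n ` F (Suc n)" by blast
    qed
  qed
  have inj: "inj_on (take n) (F (Suc n))"
    by (rule eq_card_imp_inj_on[OF fin]) (simp only: img eq)
  have ext: "s (i + n) = s (j + n)" if h: "s [i \<rightarrow> i + n] = s [j \<rightarrow> j + n]" for i j
  proof -
    have "s [i \<rightarrow> i + Suc n] = s [j \<rightarrow> j + Suc n]"
    proof (rule inj_onD[OF inj])
      show "take n (s [i \<rightarrow> i + Suc n]) = take n (s [j \<rightarrow> j + Suc n])"
        using h by (simp add: subsequence_def take_map)
      show "s [i \<rightarrow> i + Suc n] \<in> F (Suc n)" "s [j \<rightarrow> j + Suc n] \<in> F (Suc n)"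
        by (auto simp: F_def)
    qed
    then have "map s [i..<Suc (i + n)] ! n = map s [j..<Suc (j + n)] ! n"
      by (simp add: subsequence_def)
    then show ?thesis by (simp add: nth_append)
  qed
  have finn: "finite (F n)" using img fin by (metis finite_imageI)
  let ?f = "\<lambda>i. (s [i \<rightarrow> i + n])"
  have "range ?f \<subseteq> F n" by (auto simp: F_def)
  then have "finite (range ?f)" using finn finite_subset by blast
  then have "\<not> inj ?f" using finite_imageD infinite_UNIV_nat by blast
  then obtain i j where ij: "i \<noteq> j" "?f i = ?f j" unfolding inj_def by blast
  obtain i j where ij: "i < j" "?f i = ?f j"
    using ij by (metis linorder_neq_iff)
  have all: "s (i + k) = s (j + k)" for k
  proof (induction k rule: less_induct)
    case (less k)
    show ?case
    proof (cases "k < n")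
      case True
      have "map s [i..<i+n] ! k = map s [j..<j+n] ! k" using ij(2) by (simp add: subsequence_def)
      then show ?thesis using True by simp
    next
      case False
      then obtain k' where k: "k = k' + n" by (metis add.commute le_Suc_ex not_less)
      have "s [(i + k') \<rightarrow> (i + k') + n] = s [(j + k') \<rightarrow> (j + k') + n]"
        unfolding subsequence_def
      proof (rule nth_equalityI)
        show "length (map s [i + k'..<i + k' + n]) = length (map s [j + k'..<j + k' + n])" by simp
        fix t assume "t < length (map s [i + k'..<i + k' + n])"
        then have "t < n" by simp
        then have "k' + t < k" using k by simp
        then show "map s [i + k'..<i + k' + n] ! t = map s [j + k'..<j + k' + n] ! t"
          using less[of "k' + t"] \<open>t < n\<close> by (simp add: add.assoc)
      qed
      then have "s (i + k' + n) = s (j + k' + n)" by (rule ext)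
      then show ?thesis using k by (simp add: add.assoc)
    qed
  qed
  show ?thesis
    by (rule up_of_shift[of "j - i" s i]) (use ij all in \<open>auto simp: add.assoc\<close>)
qed

lemma word_from_perm:
  "underlying_word a [i \<rightarrow> i + n] =
   map (\<lambda>t. if perm_factor a i (Suc n) t (Suc t) then 0 else 1) [0..<n]"
  by (rule nth_equalityI) (auto simp: subsequence_def underlying_word_def perm_factor_def add.assoc)

theorem proposition5:
  fixes a :: "nat \<Rightarrow> real"
  assumes "inj a"
    and "\<forall>n\<ge>1. perm_complexity a n = n"
  shows "ultimately_periodic (underlying_word a) \<or> sturmian (underlying_word a)"
proof (cases "ultimately_periodic (underlying_word a)")
  case True then show ?thesis by simp
next
  case notup: False
  define s where "s = underlying_word a"
  define F where "F = (\<lambda>n. {s [i \<rightarrow> i + n] | i. True})"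
  define P where "P = (\<lambda>n. {perm_factor a i n | i. True})"
  define g where "g = (\<lambda>n (R::nat \<Rightarrow> nat \<Rightarrow> bool). map (\<lambda>t. if R t (Suc t) then 0::nat else 1) [0..<n])"
  have cardP: "card (P (Suc n)) = Suc n" for n
    using assms(2) by (auto simp: P_def perm_complexity_def)
  have finP: "finite (P (Suc n))" for n
    by (rule card_ge_0_finite) (simp add: cardP)
  have FP: "F n = g n ` P (Suc n)" for n
    by (auto simp: F_def P_def g_def s_def word_from_perm)
  have finF: "finite (F n)" for n using FP finP by simp
  have upper: "card (F n) \<le> Suc n" for n
    using FP card_image_le[OF finP, of "g n"] cardP by simp
  have take_img: "take n ` F (Suc n) = F n" for n
  proof
    show "take n ` F (Suc n) \<subseteq> F n"
      by (auto simp: F_def subsequence_def take_map)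
    show "F n \<subseteq> take n ` F (Suc n)"
    proof
      fix x assume "x \<in> F n"
      then obtain i where x: "x = s [i \<rightarrow> i + n]" by (auto simp: F_def)
      have "x = take n (s [i \<rightarrow> i + Suc n])" by (simp add: x subsequence_def take_map)
      moreover have "s [i \<rightarrow> i + Suc n] \<in> F (Suc n)" by (auto simp: F_def)
      ultimately show "x \<in> take n ` F (Suc n)" by blast
    qed
  qed
  have mono: "card (F n) \<le> card (F (Suc n))" for n
    using card_image_le[OF finF, of "take n" "Suc n"] take_img[of n] by simp
  have neq: "card (F (Suc n)) \<noteq> card (F n)" for n
  proof
    assume "card (F (Suc n)) = card (F n)"
    then have "ultimately_periodic s"
      using morse_hedlund_step[of s n] finF unfolding F_def by blast
    then show False using notup s_def by simp
  qed
  have F0: "F 0 = {[]}" by (auto simp: F_def subsequence_def)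
  have lower: "Suc n \<le> card (F n)" for n
  proof (induction n)
    case 0 then show ?case by (simp add: F0)
  next
    case (Suc n)
    then show ?case using mono[of n] neq[of n] by linarith
  qed
  have "\<forall>n\<ge>1. word_complexity s n = n + 1"
    using upper lower by (auto simp: word_complexity_def F_def intro: antisym)
  then show ?thesis using notup s_def by (simp add: sturmian_def)
qed

end
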